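(* Let $n\ge2$, $d\ge1$, $\mathbf K\in\mathbb R^{n\times d}$ with rows $\mathbf k_i$, $\beta>0$, $\tau>0$, and for a positive integer $s$ let $\mathbf T^s\in\mathbb R^{n\times n}$ be given by $\mathbf T^s_{il}=\sum_{p=0}^s\frac{1}{p!}\big(\tfrac{\beta}{\tau^2}\langle\mathbf k_i,\mathbf k_l\rangle\big)^p$. Then, with $(\sigma,\delta)\defeq\big(\frac{s}{\log n},\frac{d}{\log n}\big)$, $$\mathrm{rank}(\mathbf T^s)\le\frac{1}{\sqrt\pi}\,n^{(\sigma+\delta)\,\mathrm{Ent}\left(\frac{\sigma}{\sigma+\delta}\right)},$$ where $\mathrm{Ent}(p)\defeq-p\log p-(1-p)\log(1-p)$.
   Context: $\log$ is the natural logarithm. *)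

theory Defs
  imports "HOL-Analysis.Analysis"
begin

definition Ent :: "real \<Rightarrow> real" where
  "Ent p = - p * ln p - (1 - p) * ln (1 - p)"

definition Tmat :: "nat \<Rightarrow> real \<Rightarrow> real \<Rightarrow> real^'d^'n \<Rightarrow> real^'n^'n" where
  "Tmat s \<beta> \<tau> K = (\<chi> i l. \<Sum>p=0..s. (1 / fact p) * ((\<beta> / \<tau>^2) * ((K $ i) \<bullet> (K $ l))) ^ p)"

end

theory Submission imports Defs "HOL-Library.Multiset" "HOL-Library.FuncSet" begin

definition monoO :: "real^'d \<Rightarrow> 'd option multiset \<Rightarrow> real" where
  "monoO x N = prod_mset (image_mset (case_option 1 (\<lambda>j. x $ j)) N)"

lemma pow_expand:
  fixes x y :: "real^'d"
  shows "(x \<bullet> y) ^ p = (\<Sum>g\<in>PiE {..<p} (\<lambda>_. UNIV).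
     monoO x (image_mset (Some \<circ> g) (mset_set {..<p}) + replicate_mset q None) *
     monoO y (image_mset (Some \<circ> g) (mset_set {..<p}) + replicate_mset q None))"
proof -
  have "(x \<bullet> y) ^ p = (\<Prod>t\<in>{..<p}. \<Sum>j\<in>UNIV. x$j * y$j)"
    by (simp add: inner_vec_def)
  also have "\<dots> = (\<Sum>g\<in>PiE {..<p} (\<lambda>_. UNIV). \<Prod>t\<in>{..<p}. x$(g t) * y$(g t))"
    by (rule prod_sum_PiE) auto
  also have "\<dots> = (\<Sum>g\<in>PiE {..<p} (\<lambda>_. UNIV).
     monoO x (image_mset (Some \<circ> g) (mset_set {..<p}) + replicate_mset q None) *
     monoO y (image_mset (Some \<circ> g) (mset_set {..<p}) + replicate_mset q None))"
  proof (rule sum.cong[OF refl])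
    fix g
    have m: "monoO z (image_mset (Some \<circ> g) (mset_set {..<p}) + replicate_mset q None)
        = (\<Prod>t\<in>{..<p}. z$(g t))" for z :: "real^'d"
      by (simp add: monoO_def image_mset.compositionality o_def prod_unfold_prod_mset)
    show "(\<Prod>t\<in>{..<p}. x$(g t) * y$(g t)) = monoO x (image_mset (Some \<circ> g) (mset_set {..<p}) + replicate_mset q None) *
     monoO y (image_mset (Some \<circ> g) (mset_set {..<p}) + replicate_mset q None)"
      by (simp add: m prod.distrib)
  qed
  finally show ?thesis .
qed

lemma rank_bound_T:
  fixes K :: "real^'d^'n"
  shows "rank (Tmat s \<beta> \<tau> K) \<le> (CARD('d) + s) choose s"
proof -
  define S where "S = (\<lambda>N. (\<chi> i. monoO (K$i) N)) ` multisets_of_size (UNIV :: 'd option set) s"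
  have fin: "finite S" unfolding S_def by (intro finite_imageI finite_multisets_of_size) auto
  have cardS: "card S \<le> (CARD('d) + s) choose s"
  proof -
    have "card S \<le> card (multisets_of_size (UNIV :: 'd option set) s)"
      unfolding S_def by (rule card_image_le) (intro finite_multisets_of_size, auto)
    also have "\<dots> = (CARD('d option) + s - 1) choose s"
      by (rule card_multisets_of_size) auto
    finally show ?thesis by simp
  qed
  have "columns (Tmat s \<beta> \<tau> K) \<subseteq> span S"
  proof
    fix v assume "v \<in> columns (Tmat s \<beta> \<tau> K)"
    then obtain l where v: "v = column l (Tmat s \<beta> \<tau> K)" unfolding columns_def by auto
    define Ng where "Ng = (\<lambda>p (g::nat\<Rightarrow>'d). image_mset (Some \<circ> g) (mset_set {..<p}) + replicate_mset (s - p) None)"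
    have ent: "(\<beta> * (K $ i \<bullet> K $ l) / \<tau>\<^sup>2) ^ p / fact p = (\<Sum>g\<in>PiE {..<p} (\<lambda>_. UNIV). 1 / fact p * (\<beta> / \<tau>^2)^p * monoO (K$l) (Ng p g) * monoO (K$i) (Ng p g))" for i p
    proof -
      have "(\<beta> * (K $ i \<bullet> K $ l) / \<tau>\<^sup>2) ^ p / fact p = 1 / fact p * (\<beta> / \<tau>^2)^p * (K $ i \<bullet> K $ l)^p"
        by (simp add: power_mult_distrib power_divide)
      also have "\<dots> = (\<Sum>g\<in>PiE {..<p} (\<lambda>_. UNIV). 1 / fact p * (\<beta> / \<tau>^2)^p * monoO (K$l) (Ng p g) * monoO (K$i) (Ng p g))"
        unfolding pow_expand[where q="s - p"] Ng_def sum_distrib_left by (simp add: mult_ac)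
      finally show ?thesis .
    qed
    have "v = (\<Sum>p=0..s. \<Sum>g\<in>PiE {..<p} (\<lambda>_. UNIV).
        (1 / fact p * (\<beta> / \<tau>^2)^p * monoO (K$l) (Ng p g)) *\<^sub>R (\<chi> i. monoO (K$i) (Ng p g)))"
      unfolding v by (simp add: vec_eq_iff column_def Tmat_def sum_component ent)
    also have "\<dots> \<in> span S"
    proof (intro span_sum span_scale span_base)
      fix p g assume "p \<in> {0..s}"
      then show "(\<chi> i. monoO (K$i) (Ng p g)) \<in> S"
        unfolding S_def Ng_def multisets_of_size_def by (intro imageI) auto
    qed
    finally show "v \<in> span S" .
  qed
  then have "dim (columns (Tmat s \<beta> \<tau> K)) \<le> card S"
    using fin by (rule dim_le_card)
  then show ?thesis using cardS column_rank_def by (metis order_trans)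
qed
lemma E_step:
  assumes "n \<ge> 1"
  shows "(1 + 1 / real n) ^ n \<le> (1 + 1 / real (Suc n)) ^ Suc n"
proof -
  define y where "y = real n"
  have y: "y > 0" using assms by (simp add: y_def)
  have B: "1 + real (Suc n) * (- 1 / (y+1)^2) \<le> (1 + (- 1 / (y+1)^2)) ^ Suc n"
  proof (rule Bernoulli_inequality)
    have "1 \<le> (y+1)^2" using y by (intro one_le_power) auto
    then have "1/(y+1)^2 \<le> 1" by (simp add: divide_le_eq_1)
    then show "- 1 \<le> - 1 / (y + 1)\<^sup>2" by simp
  qed
  have e1: "1 + real (Suc n) * (- 1 / (y+1)^2) = y / (y+1)"
  proof -
    have ys: "real (Suc n) = y + 1" by (simp add: y_def)
    have "(y+1)^2 > 0" using y by simp
    then show ?thesis unfolding ys by (simp add: field_simps) (simp add: power2_eq_square algebra_simps)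
  qed
  have e2: "1 + (- 1 / (y+1)^2) = (y/(y+1)) * ((y+2)/(y+1))"
  proof -
    have h: "(y+1)^2 > 0" using y by simp
    have "1 + (-1/(y+1)^2) = ((y+1)^2 - 1)/(y+1)^2" using h by (simp add: diff_divide_distrib)
    also have "\<dots> = (y*(y+2))/((y+1)*(y+1))" by (simp add: power2_eq_square algebra_simps)
    also have "\<dots> = (y/(y+1)) * ((y+2)/(y+1))" by simp
    finally show ?thesis .
  qed
  have "y/(y+1) \<le> (y/(y+1))^Suc n * ((y+2)/(y+1))^Suc n"
    using B unfolding e1 e2 power_mult_distrib .
  then have "y/(y+1) \<le> (y/(y+1)) * ((y/(y+1))^n * ((y+2)/(y+1))^Suc n)"
    by (simp add: mult_ac)
  then have "1 \<le> (y/(y+1))^n * ((y+2)/(y+1))^Suc n"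
    using y by (simp add: divide_simps)
  then have "((y+1)/y)^n * 1 \<le> ((y+1)/y)^n * ((y/(y+1))^n * ((y+2)/(y+1))^Suc n)"
    using y by (intro mult_left_mono) auto
  also have "\<dots> = ((y+2)/(y+1))^Suc n"
    using y by (simp add: power_mult_distrib[symmetric] mult.assoc[symmetric])
  finally have "((y+1)/y)^n \<le> ((y+2)/(y+1))^Suc n" by simp
  moreover have "1 + 1 / real n = (y+1)/y" "1 + 1 / real (Suc n) = (y+2)/(y+1)"
    using y by (simp_all add: y_def field_simps)
  ultimately show ?thesis by simp
qed

lemma E_mono:
  assumes "1 \<le> a" "a \<le> c"
  shows "(1 + 1 / real a) ^ a \<le> (1 + 1 / real c) ^ c"
  using assms(2)
proof (induction c rule: dec_induct)
  case base then show ?case by simp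
next
  case (step c)
  then show ?case using E_step[of c] assms(1) by linarith
qed

lemma binom_bound:
  assumes "a \<ge> 1" "b \<ge> 1"
  shows "2 * real ((a+b) choose a) * real a ^ a * real b ^ b \<le> real (a+b) ^ (a+b)"
  using assms(1)
proof (induction a rule: dec_induct)
  case base
  have "1 + real b * (1 / real b) \<le> (1 + 1 / real b) ^ b"
    by (rule Bernoulli_inequality) (rule order_trans[of _ 0], auto)
  then have "2 \<le> ((real b + 1) / real b) ^ b" using assms(2) by (simp add: field_simps)
  then have "2 * real b ^ b \<le> (real b + 1) ^ b" using assms(2) by (simp add: divide_simps power_divide)
  then have "2 * real b ^ b * (real b + 1) \<le> (real b + 1) ^ b * (real b + 1)"
    by (intro mult_right_mono) auto
  then show ?case by (simp add: algebra_simps)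
next
  case (step a)
  define m where "m = a + b"
  have a: "real a > 0" using step by simp
  have m: "real m > 0" using assms(2) by (simp add: m_def)
  have IH: "2 * real (m choose a) * real a ^ a * real b ^ b \<le> real m ^ m"
    using step.IH by (simp add: m_def)
  have E: "(1 + 1 / real a) ^ a \<le> (1 + 1 / real m) ^ m"
    using E_mono[of a m] step by (simp add: m_def)
  have E': "(real a + 1) ^ a / real a ^ a \<le> (real m + 1) ^ m / real m ^ m"
    using E a m by (simp add: field_simps power_divide)
  have ch: "real (Suc m choose Suc a) * (real a + 1) = (real m + 1) * real (m choose a)"
    using Suc_times_binomial[of a m] by (simp add: algebra_simps flip: of_nat_mult)
  have "2 * real (Suc m choose Suc a) * real (Suc a) ^ Suc a * real b ^ b
      = (2 * real (m choose a) * real a ^ a * real b ^ b) * (real m + 1) * ((real a + 1) ^ a / real a ^ a)"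
  proof -
    have ch2: "real (Suc m choose Suc a) = (real m + 1) * real (m choose a) / (real a + 1)"
      using ch a by (simp add: eq_divide_eq del: binomial_Suc_Suc)
    show ?thesis unfolding ch2 using a by (simp add: field_simps del: binomial_Suc_Suc)
  qed
  also have "\<dots> \<le> real m ^ m * (real m + 1) * ((real m + 1) ^ m / real m ^ m)"
    using IH E' a by (intro mult_mono) (auto intro: mult_nonneg_nonneg)
  also have "\<dots> = real (Suc m) ^ Suc m"
    using m by (simp add: field_simps)
  finally show ?case by (simp add: m_def)
qed

theorem lemma4:
  fixes K :: "real^'d^'n" and \<beta> \<tau> :: real and s :: nat
  assumes "CARD('n) \<ge> 2"
    and "\<beta> > 0" and "\<tau> > 0" and "s \<ge> 1"
  shows "let n = real CARD('n); d = real CARD('d);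
             \<sigma> = real s / ln n; \<delta> = d / ln n
         in real (rank (Tmat s \<beta> \<tau> K))
              \<le> (1 / sqrt pi) * n powr ((\<sigma> + \<delta>) * Ent (\<sigma> / (\<sigma> + \<delta>)))"
proof -
  define n where "n = real CARD('n)"
  define D where "D = CARD('d)"
  define m where "m = s + D"
  have D1: "D \<ge> 1" unfolding D_def by (simp add: Suc_le_eq)
  have ln: "ln n > 0" using assms(1) by (simp add: n_def)
  have sp: "real s > 0" using assms(4) by simp
  have dp: "real D > 0" using D1 by simp
  have mp: "real m > 0" using sp by (simp add: m_def)
  have frac: "(real s / ln n) / (real s / ln n + real D / ln n) = real s / real m"
    using ln by (simp add: m_def field_simps)
  have sum: "real s / ln n + real D / ln n = real m / ln n"
    by (simp add: m_def add_divide_distrib)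
  have one_minus: "1 - real s / real m = real D / real m"
    using mp by (simp add: m_def field_simps)
  have X: "ln n * (real m / ln n * Ent (real s / real m))
        = real m * ln (real m) - real s * ln (real s) - real D * ln (real D)"
  proof -
    have "ln n * (real m / ln n * Ent (real s / real m)) = real m * Ent (real s / real m)"
      using ln by simp
    also have "\<dots> = - real s * ln (real s / real m) - real D * ln (real D / real m)"
      unfolding Ent_def one_minus using mp by (simp add: field_simps)
    also have "\<dots> = real m * ln (real m) - real s * ln (real s) - real D * ln (real D)"
      using sp dp mp by (simp add: ln_div m_def algebra_simps)
    finally show ?thesis .
  qed
  have RHS: "n powr ((real s / ln n + real D / ln n) * Ent ((real s / ln n) / (real s / ln n + real D / ln n)))
      = real m ^ m / (real s ^ s * real D ^ D)"
  proof -
    have npos: "n > 0" using assms(1) by (simp add: n_def)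
    have "n powr ((real s / ln n + real D / ln n) * Ent ((real s / ln n) / (real s / ln n + real D / ln n)))
        = exp (real m * ln (real m) - real s * ln (real s) - real D * ln (real D))"
      unfolding frac sum powr_def using npos X ln by (simp add: mult.commute)
    also have "\<dots> = exp (real m * ln (real m)) / (exp (real s * ln (real s)) * exp (real D * ln (real D)))"
      by (simp add: exp_diff)
    also have "\<dots> = real m ^ m / (real s ^ s * real D ^ D)"
      using sp dp mp by (simp add: exp_of_nat_mult)
    finally show ?thesis .
  qed
  have B: "2 * real (m choose s) * real s ^ s * real D ^ D \<le> real m ^ m"
    using binom_bound[of s D] assms(4) D1 by (simp add: m_def)
  have R: "real (rank (Tmat s \<beta> \<tau> K)) \<le> real (m choose s)"
    using rank_bound_T[of s \<beta> \<tau> K] by (simp add: m_def D_def add.commute)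
  have pos: "real s ^ s * real D ^ D > 0" using sp dp by simp
  have "real (m choose s) \<le> (1/2) * (real m ^ m / (real s ^ s * real D ^ D))"
    using B pos by (simp add: field_simps)
  also have "\<dots> \<le> (1 / sqrt pi) * (real m ^ m / (real s ^ s * real D ^ D))"
  proof (rule mult_right_mono)
    have "sqrt pi \<le> sqrt 4" using pi_less_4 by (intro real_sqrt_le_mono) simp
    then have "sqrt pi \<le> 2" by simp
    then show "1/2 \<le> 1 / sqrt pi" using pi_gt_zero by (simp add: divide_simps)
  qed (use pos mp in simp)
  finally show ?thesis
    unfolding Let_def using R RHS by (simp add: n_def D_def)
qed

end
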